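(* Let $f:\mathcal E\to\mathbb R$ be smooth, $\mathcal M\subset\mathcal E$ a submanifold, and $\mathrm{Retr}$ a smooth retraction extended to $\mathcal E$ as in the context. Then for every $x\in\mathcal M$ there exists $\delta>0$ with the following property. For every $\xi\in\mathcal T_x\mathcal M$ with $\|\xi\|<\delta$, setting $y=\mathrm{Retr}(x,\xi)$, one has $\|P_{\mathcal T_y\mathcal M}-\mathrm{J}_\xi\mathrm{Retr}(x,\xi)\|_2<1$ and $$\|\mathrm{grad}\, f(y)\|\le\frac{1}{1-\|P_{\mathcal T_y\mathcal M}-\mathrm{J}_\xi\mathrm{Retr}(x,\xi)\|_2}\,\|\nabla_\xi\hat f_x(\xi)\|,$$ where $\|\cdot\|_2$ is the spectral norm.
   Context: $\mathcal E=\mathbb R^n$ carries the standard inner product and norm. $\mathcal M\subset\mathcal E$ is a smooth embedded submanifold with tangent spaces $\mathcal T_x\mathcal M$, and $P_{\mathcal T_x\mathcal M}$ is the orthogonal projection onto $\mathcal T_x\mathcal M$. The Riemannian gradient is $\mathrm{grad}\, f(x)=P_{\mathcal T_x\mathcal M}\nabla f(x)$. A retraction is a smooth map $\mathrm{Retr}(x,\xi)\in\mathcal M$, for $x\in\mathcal M$ and $\xi\in\mathcal T_x\mathcal M$, with $\mathrm{Retr}(x,0)=x$ and $\frac d{dt}\mathrm{Retr}(x,t\xi)|_{t=0}=\xi$. It is extended to $\mathcal E$ by $\mathrm{Retr}(x,z):=\mathrm{Retr}(x,P_{\mathcal T_x\mathcal M}z)$. The pullback is $\hat f_x(\xi)=f(\mathrm{Retr}(x,\xi))$.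 $\mathrm J_\xi$ and $\nabla_\xi$ denote the Euclidean Jacobian and gradient with respect to $\xi\in\mathcal E$. *)

theory Defs
  imports "HOL-Analysis.Analysis"
begin

text \<open>C-infinity real-valued functions on an (open) set U: g lies in a family S of
  functions that are differentiable on U and that is closed under taking
  directional derivatives x \<mapsto> Dh(x) v, for every direction v.\<close>
definition smooth_real_on :: "'a::euclidean_space set \<Rightarrow> ('a \<Rightarrow> real) \<Rightarrow> bool" where
  "smooth_real_on U g \<longleftrightarrow>
     (\<exists>S. g \<in> S \<and> (\<forall>h\<in>S. h differentiable_on U \<and>
                         (\<forall>v. (\<lambda>x. frechet_derivative h (at x) v) \<in> S)))"

definition smooth_on :: "'a::euclidean_space set \<Rightarrow> ('a \<Rightarrow> 'b::euclidean_space) \<Rightarrow> bool" where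
  "smooth_on U F \<longleftrightarrow> open U \<and> (\<forall>b\<in>Basis. smooth_real_on U (\<lambda>x. F x \<bullet> b))"

definition smooth_map_on :: "'a::euclidean_space set \<Rightarrow> ('a \<Rightarrow> 'b::euclidean_space) \<Rightarrow> bool" where
  "smooth_map_on S F \<longleftrightarrow>
     (\<forall>p\<in>S. \<exists>U G. open U \<and> p \<in> U \<and> smooth_on U G \<and> (\<forall>q\<in>U \<inter> S. G q = F q))"

definition submanifold :: "'a::euclidean_space set \<Rightarrow> bool" where
  "submanifold M \<longleftrightarrow>
     (\<forall>p\<in>M. \<exists>U V (\<phi>::'a \<Rightarrow> 'a) \<psi> L.
        open U \<and> open V \<and> p \<in> U \<and> smooth_on U \<phi> \<and> smooth_on V \<psi> \<and>
        \<phi> ` U = V \<and> (\<forall>x\<in>U. \<psi> (\<phi> x) = x) \<and> (\<forall>y\<in>V. \<phi> (\<psi> y) = y) \<and>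
        subspace L \<and> \<phi> ` (M \<inter> U) = V \<inter> L)"

definition tangent_space :: "'a::euclidean_space set \<Rightarrow> 'a \<Rightarrow> 'a set" where
  "tangent_space M x =
     {v. \<exists>(c::real \<Rightarrow> 'a) e. e > 0 \<and> smooth_on {-e<..<e} c \<and> c 0 = x \<and>
          (\<forall>t\<in>{-e<..<e}. c t \<in> M) \<and> (c has_vector_derivative v) (at 0)}"

definition tproj :: "'a::euclidean_space set \<Rightarrow> 'a \<Rightarrow> 'a \<Rightarrow> 'a" where
  "tproj M x z = closest_point (tangent_space M x) z"

definition tangent_bundle :: "'a::euclidean_space set \<Rightarrow> ('a \<times> 'a) set" where
  "tangent_bundle M = {(x, v). x \<in> M \<and> v \<in> tangent_space M x}"

definition egrad :: "('a::euclidean_space \<Rightarrow> real) \<Rightarrow> 'a \<Rightarrow> 'a" where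
  "egrad g z = (SOME w. GDERIV g z :> w)"

definition rgrad :: "'a::euclidean_space set \<Rightarrow> ('a \<Rightarrow> real) \<Rightarrow> 'a \<Rightarrow> 'a" where
  "rgrad M f x = tproj M x (egrad f x)"

definition retraction :: "'a::euclidean_space set \<Rightarrow> ('a \<Rightarrow> 'a \<Rightarrow> 'a) \<Rightarrow> bool" where
  "retraction M R \<longleftrightarrow>
     smooth_map_on (tangent_bundle M) (\<lambda>(x, v). R x v) \<and>
     (\<forall>x\<in>M. \<forall>v\<in>tangent_space M x. R x v \<in> M) \<and>
     (\<forall>x\<in>M. R x 0 = x) \<and>
     (\<forall>x\<in>M. \<forall>v\<in>tangent_space M x. ((\<lambda>t. R x (t *\<^sub>R v)) has_vector_derivative v) (at 0))"

definition retr_ext :: "'a::euclidean_space set \<Rightarrow> ('a \<Rightarrow> 'a \<Rightarrow> 'a) \<Rightarrow> 'a \<Rightarrow> 'a \<Rightarrow> 'a" where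
  "retr_ext M R x z = R x (tproj M x z)"

end

theory Submission
  imports Defs
begin

section \<open>Projection onto subspaces\<close>

context fixes S :: "'a::euclidean_space set" begin

lemma cp_in: "subspace S \<Longrightarrow> closest_point S a \<in> S"
  by (metis closed_subspace closest_point_in_set empty_iff subspace_0)

lemma cp_orth:
  assumes S: "subspace S" and y: "y \<in> S"
  shows "(a - closest_point S a) \<bullet> y = 0"
proof -
  let ?p = "closest_point S a"
  have p: "?p \<in> S" using cp_in[OF S] .
  have c: "convex S" "closed S" using S by (auto simp: subspace_imp_convex closed_subspace)
  have "?p + y \<in> S" "?p - y \<in> S" using p y S by (auto simp: subspace_add subspace_diff)
  from closest_point_dot[OF c this(1), where a=a] closest_point_dot[OF c this(2), where a=a]
  show ?thesis by (simp add: inner_diff_right)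
qed

lemma cp_char:
  assumes S: "subspace S" and p: "p \<in> S" and o: "\<And>y. y \<in> S \<Longrightarrow> (a - p) \<bullet> y = 0"
  shows "closest_point S a = p"
proof -
  have c: "convex S" "closed S" using S by (auto simp: subspace_imp_convex closed_subspace)
  have "\<forall>z\<in>S. dist a p \<le> dist a z"
  proof
    fix z assume z: "z \<in> S"
    have "p - z \<in> S" using S p z by (simp add: subspace_diff)
    hence o2: "(a - p) \<bullet> (p - z) = 0" using o by blast
    have "(norm (a - z))\<^sup>2 = (norm ((a - p) + (p - z)))\<^sup>2" by simp
    also have "\<dots> = (norm (a - p))\<^sup>2 + (norm (p - z))\<^sup>2"
      using norm_add_Pythagorean[of "a - p" "p - z"] o2 by (simp add: orthogonal_def)
    finally have "(norm (a - p))\<^sup>2 \<le> (norm (a - z))\<^sup>2" by simp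
    thus "dist a p \<le> dist a z" by (simp add: dist_norm power2_le_iff_abs_le abs_le_square_iff)
  qed
  from closest_point_unique[OF c p this] show ?thesis by simp
qed

lemma cp_add: "subspace S \<Longrightarrow> closest_point S (a + b) = closest_point S a + closest_point S b"
  apply (rule cp_char)
    apply (simp_all add: cp_in subspace_add)
  by (metis (no_types, lifting) add_diff_add cp_orth inner_add_left add_0)

lemma cp_scale: "subspace S \<Longrightarrow> closest_point S (c *\<^sub>R a) = c *\<^sub>R closest_point S a"
  apply (rule cp_char)
    apply (simp_all add: cp_in subspace_scale)
  by (metis cp_orth inner_scaleR_left mult_zero_right scaleR_right_diff_distrib)

lemma cp_linear: "subspace S \<Longrightarrow> linear (closest_point S)"
  by (simp add: linearI cp_add cp_scale)

lemma cp_norm: assumes "subspace S" shows "norm (closest_point S a) \<le> norm a"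
proof -
  let ?p = "closest_point S a"
  have "(a - ?p) \<bullet> ?p = 0" using cp_orth[OF assms cp_in[OF assms]] .
  hence "(norm a)\<^sup>2 = (norm ?p)\<^sup>2 + (norm (a - ?p))\<^sup>2"
    by (simp add: power2_norm_eq_inner inner_diff_left inner_diff_right inner_commute)
  hence "(norm ?p)\<^sup>2 \<le> (norm a)\<^sup>2" by simp
  thus ?thesis by (simp add: power2_le_iff_abs_le)
qed

lemma cp_bounded_linear: "subspace S \<Longrightarrow> bounded_linear (closest_point S)"
  using cp_linear linear_conv_bounded_linear by blast

lemma cp_id: "subspace S \<Longrightarrow> x \<in> S \<Longrightarrow> closest_point S x = x"
  by (simp add: closest_point_self)

end

section \<open>Smoothness basics\<close>

lemma smooth_real_diff:
  assumes "smooth_real_on U g" shows "g differentiable_on U"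
proof -
  obtain S where g: "g \<in> S" and S: "\<forall>h\<in>S. h differentiable_on U \<and> (\<forall>v. (\<lambda>x. frechet_derivative h (at x) v) \<in> S)"
    using assms unfolding smooth_real_on_def by (elim exE conjE)
  from bspec[OF S g] show ?thesis by (rule conjunct1)
qed

lemma smooth_real_deriv:
  assumes "smooth_real_on U g" shows "smooth_real_on U (\<lambda>x. frechet_derivative g (at x) v)"
proof -
  obtain S where g: "g \<in> S" and S: "\<forall>h\<in>S. h differentiable_on U \<and> (\<forall>v. (\<lambda>x. frechet_derivative h (at x) v) \<in> S)"
    using assms unfolding smooth_real_on_def by (elim exE conjE)
  have "(\<lambda>x. frechet_derivative g (at x) v) \<in> S" using bspec[OF S g] by simp
  with S show ?thesis unfolding smooth_real_on_def by (intro exI[of _ S] conjI)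
qed

lemma smooth_real_cont: "smooth_real_on U g \<Longrightarrow> continuous_on U g"
  by (rule differentiable_imp_continuous_on, rule smooth_real_diff)

lemma smooth_on_differentiable:
  assumes "smooth_on U F" "x \<in> U" shows "F differentiable (at x)"
proof -
  have o: "open U" using assms(1) unfolding smooth_on_def by (rule conjunct1)
  have "(\<lambda>x. F x \<bullet> b) differentiable (at x within UNIV)" if b: "b \<in> Basis" for b
  proof -
    have "smooth_real_on U (\<lambda>x. F x \<bullet> b)" using assms(1) b unfolding smooth_on_def by blast
    hence "(\<lambda>x. F x \<bullet> b) differentiable_on U" by (rule smooth_real_diff)
    hence "(\<lambda>x. F x \<bullet> b) differentiable (at x within U)" using assms(2) unfolding differentiable_on_def by blast
    thus ?thesis using at_within_open[OF assms(2) o] by simp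
  qed
  then show ?thesis using differentiable_componentwise_within[of F x UNIV] by blast
qed

lemma fd_component:
  assumes "F differentiable (at x)"
  shows "frechet_derivative F (at x) v \<bullet> b = frechet_derivative (\<lambda>x. F x \<bullet> b) (at x) v"
proof -
  have "(F has_derivative frechet_derivative F (at x)) (at x)" using assms frechet_derivative_works by blast
  hence "((\<lambda>x. F x \<bullet> b) has_derivative (\<lambda>v. frechet_derivative F (at x) v \<bullet> b)) (at x)"
    by (auto intro!: derivative_eq_intros)
  from fun_cong[OF frechet_derivative_at[OF this], of v] show ?thesis by simp
qed

lemma continuous_on_componentwise':
  fixes F :: "'a::topological_space \<Rightarrow> 'b::euclidean_space"
  assumes "\<And>b. b \<in> Basis \<Longrightarrow> continuous_on U (\<lambda>x. F x \<bullet> b)"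
  shows "continuous_on U F"
proof -
  have "continuous_on U (\<lambda>x. \<Sum>b\<in>Basis. (F x \<bullet> b) *\<^sub>R b)"
    by (intro continuous_intros assms)
  thus ?thesis by (simp add: euclidean_representation)
qed

lemma smooth_on_cont: assumes "smooth_on U F" shows "continuous_on U F"
proof (rule continuous_on_componentwise')
  fix b :: 'b assume b: "b \<in> Basis"
  have "smooth_real_on U (\<lambda>x. F x \<bullet> b)" using assms b unfolding smooth_on_def by blast
  thus "continuous_on U (\<lambda>x. F x \<bullet> b)" by (rule smooth_real_cont)
qed

lemma smooth_on_deriv_cont:
  assumes "smooth_on U F" shows "continuous_on U (\<lambda>p. frechet_derivative F (at p) v)"
proof (rule continuous_on_componentwise')
  fix b :: 'b assume b: "b \<in> Basis"
  have "smooth_real_on U (\<lambda>x. F x \<bullet> b)" using assms b unfolding smooth_on_def by blast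
  hence "smooth_real_on U (\<lambda>p. frechet_derivative (\<lambda>x. F x \<bullet> b) (at p) v)"
    by (rule smooth_real_deriv)
  hence "continuous_on U (\<lambda>p. frechet_derivative (\<lambda>x. F x \<bullet> b) (at p) v)" by (rule smooth_real_cont)
  thus "continuous_on U (\<lambda>p. frechet_derivative F (at p) v \<bullet> b)"
    by (rule continuous_on_eq) (simp add: fd_component smooth_on_differentiable[OF assms])
qed

lemma smooth_real_affine:
  fixes h :: "'a::euclidean_space \<Rightarrow> real"
  assumes h: "smooth_real_on W h" and W: "open W" and I: "open I"
    and sub: "\<And>t. t \<in> I \<Longrightarrow> a + t *\<^sub>R u \<in> W"
  shows "smooth_real_on I (\<lambda>t. h (a + t *\<^sub>R u))"
proof -
  obtain S where hS: "h \<in> S" and S0: "\<forall>k\<in>S. k differentiable_on W \<and>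
     (\<forall>v. (\<lambda>x. frechet_derivative k (at x) v) \<in> S)"
    using h unfolding smooth_real_on_def by (elim exE conjE)
  have S: "k differentiable_on W \<and> (\<forall>v. (\<lambda>x. frechet_derivative k (at x) v) \<in> S)" if "k \<in> S" for k
    using S0 that by (rule bspec)
  define S' where "S' = {k. \<exists>g\<in>S. \<forall>t\<in>I. k t = g (a + t *\<^sub>R u)}"
  have der: "((\<lambda>t. k t) has_derivative (\<lambda>s. frechet_derivative g (at (a + t *\<^sub>R u)) (s *\<^sub>R u))) (at t)"
    if g: "g \<in> S" and k: "\<forall>t\<in>I. k t = g (a + t *\<^sub>R u)" and t: "t \<in> I" for k g t
  proof -
    have "g differentiable_on W" using S[OF g] by (rule conjunct1)
    hence "g differentiable (at (a + t *\<^sub>R u) within W)"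
      using sub[OF t] unfolding differentiable_on_def by blast
    hence "g differentiable (at (a + t *\<^sub>R u))" using at_within_open[OF sub[OF t] W] by simp
    hence g': "(g has_derivative frechet_derivative g (at (a + t *\<^sub>R u))) (at (a + t *\<^sub>R u))"
      using frechet_derivative_works by blast
    have l: "((\<lambda>t. a + t *\<^sub>R u) has_derivative (\<lambda>s. s *\<^sub>R u)) (at t)"
      by (auto intro!: derivative_eq_intros)
    have "((\<lambda>t. g (a + t *\<^sub>R u)) has_derivative (\<lambda>s. frechet_derivative g (at (a + t *\<^sub>R u)) (s *\<^sub>R u))) (at t)"
      using diff_chain_at[OF l g'] by (simp add: o_def)
    thus ?thesis
      by (rule has_derivative_transform_within_open[OF _ I t]) (use k in auto)
  qed
  have "(\<lambda>t. h (a + t *\<^sub>R u)) \<in> S'" using hS unfolding S'_def by blast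
  moreover have "\<forall>k\<in>S'. k differentiable_on I \<and> (\<forall>v. (\<lambda>x. frechet_derivative k (at x) v) \<in> S')"
  proof
    fix k assume "k \<in> S'"
    then obtain g where g: "g \<in> S" and k: "\<forall>t\<in>I. k t = g (a + t *\<^sub>R u)" unfolding S'_def by blast
    have "k differentiable_on I"
      unfolding differentiable_on_def
    proof
      fix t assume "t \<in> I"
      from has_derivative_at_withinI[OF der[OF g k this]] show "k differentiable at t within I"
        by (rule differentiableI)
    qed
    moreover have "(\<lambda>x. frechet_derivative k (at x) v) \<in> S'" for v
    proof -
      have "(\<lambda>y. frechet_derivative g (at y) (v *\<^sub>R u)) \<in> S" using S[OF g] by blast
      moreover have "\<forall>t\<in>I. frechet_derivative k (at t) v = frechet_derivative g (at (a + t *\<^sub>R u)) (v *\<^sub>R u)"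
      proof
        fix t assume "t \<in> I"
        show "frechet_derivative k (at t) v = frechet_derivative g (at (a + t *\<^sub>R u)) (v *\<^sub>R u)"
          using fun_cong[OF frechet_derivative_at[OF der[OF g k \<open>t \<in> I\<close>]], of v] by simp
      qed
      ultimately show ?thesis unfolding S'_def
        by (intro CollectI bexI[of _ "\<lambda>y. frechet_derivative g (at y) (v *\<^sub>R u)"]) auto
    qed
    ultimately show "k differentiable_on I \<and> (\<forall>v. (\<lambda>x. frechet_derivative k (at x) v) \<in> S')" by blast
  qed
  ultimately show ?thesis unfolding smooth_real_on_def by blast
qed

lemma smooth_on_affine:
  fixes G :: "'a::euclidean_space \<Rightarrow> 'b::euclidean_space"
  assumes G: "smooth_on W G" and I: "open I"
    and sub: "\<And>t. t \<in> I \<Longrightarrow> a + t *\<^sub>R u \<in> W"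
  shows "smooth_on I (\<lambda>t. G (a + t *\<^sub>R u))"
proof -
  have o: "open W" using G unfolding smooth_on_def by (rule conjunct1)
  have "smooth_real_on I (\<lambda>t. G (a + t *\<^sub>R u) \<bullet> b)" if b: "b \<in> Basis" for b
  proof -
    have "smooth_real_on W (\<lambda>x. G x \<bullet> b)" using G b unfolding smooth_on_def by blast
    from smooth_real_affine[OF this o I sub] show ?thesis by simp
  qed
  with I show ?thesis unfolding smooth_on_def by blast
qed

locale chart =
  fixes M :: "'a::euclidean_space set" and U V :: "'a set" and \<phi> \<psi> :: "'a \<Rightarrow> 'a" and L :: "'a set"
  assumes oU: "open U" and oV: "open V" and s\<phi>: "smooth_on U \<phi>" and s\<psi>: "smooth_on V \<psi>"
    and im: "\<phi> ` U = V" and inv1': "\<forall>x\<in>U. \<psi> (\<phi> x) = x" and inv2': "\<forall>y\<in>V. \<phi> (\<psi> y) = y"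
    and L: "subspace L" and slice: "\<phi> ` (M \<inter> U) = V \<inter> L"
begin

lemma inv1: "x \<in> U \<Longrightarrow> \<psi> (\<phi> x) = x" using inv1' by blast
lemma inv2: "y \<in> V \<Longrightarrow> \<phi> (\<psi> y) = y" using inv2' by blast

lemma \<phi>V: "z \<in> U \<Longrightarrow> \<phi> z \<in> V" using im by blast

lemma d\<phi>: "z \<in> U \<Longrightarrow> \<phi> differentiable (at z)" by (rule smooth_on_differentiable[OF s\<phi>])
lemma d\<psi>: "y \<in> V \<Longrightarrow> \<psi> differentiable (at y)" by (rule smooth_on_differentiable[OF s\<psi>])

lemma dpsi_dphi:
  assumes z: "z \<in> U"
  shows "frechet_derivative \<psi> (at (\<phi> z)) (frechet_derivative \<phi> (at z) v) = v"
proof -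
  have "frechet_derivative (\<psi> \<circ> \<phi>) (at z) = frechet_derivative \<psi> (at (\<phi> z)) \<circ> frechet_derivative \<phi> (at z)"
    by (rule frechet_derivative_compose[OF d\<phi>[OF z] d\<psi>[OF \<phi>V[OF z]]])
  moreover have "frechet_derivative (\<psi> \<circ> \<phi>) (at z) = frechet_derivative id (at z)"
    by (rule frechet_derivative_transform_within_open[OF _ oU z])
       (auto simp: inv1 intro!: differentiable_chain_at d\<phi>[OF z] d\<psi>[OF \<phi>V[OF z]])
  ultimately have "frechet_derivative \<psi> (at (\<phi> z)) \<circ> frechet_derivative \<phi> (at z) = id" by simp
  from fun_cong[OF this, of v] show ?thesis by simp
qed

lemma dphi_dpsi:
  assumes z: "z \<in> U"
  shows "frechet_derivative \<phi> (at z) (frechet_derivative \<psi> (at (\<phi> z)) w) = w"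
proof -
  have y: "\<phi> z \<in> V" by (rule \<phi>V[OF z])
  have "frechet_derivative (\<phi> \<circ> \<psi>) (at (\<phi> z)) = frechet_derivative \<phi> (at (\<psi> (\<phi> z))) \<circ> frechet_derivative \<psi> (at (\<phi> z))"
    by (rule frechet_derivative_compose) (use d\<phi>[OF z] d\<psi>[OF y] inv1[OF z] in auto)
  moreover have "frechet_derivative (\<phi> \<circ> \<psi>) (at (\<phi> z)) = frechet_derivative id (at (\<phi> z))"
    by (rule frechet_derivative_transform_within_open[OF _ oV y])
       (use d\<phi>[OF z] d\<psi>[OF y] inv1[OF z] inv2 in \<open>auto intro!: differentiable_chain_at\<close>)
  ultimately have "frechet_derivative \<phi> (at z) \<circ> frechet_derivative \<psi> (at (\<phi> z)) = id" using inv1[OF z] by simp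
  from fun_cong[OF this, of w] show ?thesis by simp
qed

lemma tangent_sup:
  assumes z: "z \<in> M \<inter> U" and w: "w \<in> L"
  shows "frechet_derivative \<psi> (at (\<phi> z)) w \<in> tangent_space M z"
proof -
  have y: "\<phi> z \<in> V" using \<phi>V z by blast
  obtain r where r: "r > 0" "ball (\<phi> z) r \<subseteq> V" using oV y openE by blast
  define e where "e = r / (norm w + 1)"
  have "norm w + 1 > 0" using norm_ge_zero[of w] by linarith
  hence e: "e > 0" using r unfolding e_def by simp
  have sub: "\<phi> z + t *\<^sub>R w \<in> V" if t: "t \<in> {-e<..<e}" for t
  proof -
    have "norm (t *\<^sub>R w) = \<bar>t\<bar> * norm w" by simp
    also have "\<dots> \<le> e * norm w" using t by (intro mult_right_mono) auto
    also have "\<dots> < r" using r unfolding e_def by (simp add: field_simps add_pos_nonneg)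
    finally have "dist (\<phi> z + t *\<^sub>R w) (\<phi> z) < r" by (simp add: dist_norm)
    thus ?thesis using r by (auto simp: dist_commute)
  qed
  define c where "c = (\<lambda>t. \<psi> (\<phi> z + t *\<^sub>R w))"
  have sc: "smooth_on {-e<..<e} c" unfolding c_def
    by (rule smooth_on_affine[OF s\<psi> open_greaterThanLessThan sub])
  have c0: "c 0 = z" using z inv1 by (simp add: c_def)
  have cM: "c t \<in> M" if t: "t \<in> {-e<..<e}" for t
  proof -
    have "\<phi> z \<in> \<phi> ` (M \<inter> U)" using z by (rule imageI)
    hence "\<phi> z \<in> L" using slice by simp
    hence "\<phi> z + t *\<^sub>R w \<in> L" by (rule subspace_add[OF L _ subspace_scale[OF L w]])
    hence "\<phi> z + t *\<^sub>R w \<in> \<phi> ` (M \<inter> U)" using sub[OF t] by (simp add: slice)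
    then obtain m where m2: "\<phi> z + t *\<^sub>R w = \<phi> m" and m: "m \<in> M \<inter> U" by (rule imageE)
    have "c t = m" unfolding c_def m2 using m inv1 by blast
    thus ?thesis using m by simp
  qed
  have l: "((\<lambda>t. \<phi> z + t *\<^sub>R w) has_derivative (\<lambda>s. s *\<^sub>R w)) (at 0)"
    by (auto intro!: derivative_eq_intros)
  have g': "(\<psi> has_derivative frechet_derivative \<psi> (at (\<phi> z + 0 *\<^sub>R w))) (at (\<phi> z + 0 *\<^sub>R w))"
    using frechet_derivative_works[THEN iffD1, OF d\<psi>[OF y]] by simp
  have lin: "linear (frechet_derivative \<psi> (at (\<phi> z)))" by (rule linear_frechet_derivative[OF d\<psi>[OF y]])
  have "(c has_derivative (\<lambda>s. frechet_derivative \<psi> (at (\<phi> z)) (s *\<^sub>R w))) (at 0)"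
    using diff_chain_at[OF l g'] by (simp add: o_def c_def)
  hence "(c has_vector_derivative frechet_derivative \<psi> (at (\<phi> z)) w) (at 0)"
    unfolding has_vector_derivative_def using linear_scale[OF lin] by simp
  thus ?thesis unfolding tangent_space_def using e sc c0 cM by blast
qed

lemma tangent_sub:
  assumes z: "z \<in> M \<inter> U" and v: "v \<in> tangent_space M z"
  shows "v \<in> frechet_derivative \<psi> (at (\<phi> z)) ` L"
proof -
  obtain c e where e: "e > 0" and sc: "smooth_on {-e<..<e} c" and c0: "c 0 = z"
    and cM: "\<forall>t\<in>{-e<..<e}. c t \<in> M" and cd: "(c has_vector_derivative v) (at 0)"
    using v unfolding tangent_space_def by blast
  define Q where "Q = closest_point L"
  have Qb: "bounded_linear Q" unfolding Q_def by (rule cp_bounded_linear[OF L])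
  define D where "D = frechet_derivative \<phi> (at z)"
  have zU: "z \<in> U" using z by blast
  have \<phi>d: "(\<phi> has_derivative D) (at (c 0))" unfolding D_def c0 using d\<phi>[OF zU] frechet_derivative_works by blast
  have lD: "linear D" unfolding D_def by (rule linear_frechet_derivative[OF d\<phi>[OF zU]])
  have cd': "(c has_derivative (\<lambda>s. s *\<^sub>R v)) (at 0)" using cd by (simp add: has_vector_derivative_def)
  have "((\<lambda>t. \<phi> (c t)) has_derivative (\<lambda>s. D (s *\<^sub>R v))) (at 0)"
    using diff_chain_at[OF cd' \<phi>d] by (simp add: o_def)
  hence h1: "((\<lambda>t. \<phi> (c t)) has_derivative (\<lambda>s. s *\<^sub>R D v)) (at 0)" using linear_scale[OF lD] by simp
  have h2: "((\<lambda>t. \<phi> (c t) - Q (\<phi> (c t))) has_derivative (\<lambda>s. s *\<^sub>R D v - Q (s *\<^sub>R D v))) (at 0)"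
    by (intro has_derivative_diff h1 bounded_linear.has_derivative[OF Qb])
  define X where "X = {-e<..<e} \<inter> c -` U"
  have cc: "continuous_on {-e<..<e} c" by (rule smooth_on_cont[OF sc])
  have oX: "open X" unfolding X_def by (rule continuous_open_preimage[OF cc open_greaterThanLessThan oU])
  have X0: "0 \<in> X" unfolding X_def using e c0 zU by auto
  have zero: "\<phi> (c t) - Q (\<phi> (c t)) = 0" if t: "t \<in> X" for t
  proof -
    have "c t \<in> M \<inter> U" using t cM unfolding X_def by blast
    hence "\<phi> (c t) \<in> L" using slice by blast
    thus ?thesis unfolding Q_def by (simp add: cp_id[OF L])
  qed
  have h3: "((\<lambda>t. 0) has_derivative (\<lambda>s. s *\<^sub>R D v - Q (s *\<^sub>R D v))) (at 0)"
    by (rule has_derivative_transform_within_open[OF h2 oX X0]) (use zero in auto)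
  have "(\<lambda>s. s *\<^sub>R D v - Q (s *\<^sub>R D v)) = (\<lambda>s::real. 0)"
    by (rule has_derivative_unique[OF h3]) simp
  from fun_cong[OF this, of 1] have "D v = Q (D v)" by simp
  hence DL: "D v \<in> L" unfolding Q_def by (metis cp_in[OF L])
  have "v = frechet_derivative \<psi> (at (\<phi> z)) (D v)" unfolding D_def by (simp add: dpsi_dphi[OF zU])
  thus ?thesis using DL by blast
qed

lemma tangent_eq:
  assumes z: "z \<in> M \<inter> U"
  shows "tangent_space M z = frechet_derivative \<psi> (at (\<phi> z)) ` L"
  using tangent_sub[OF z] tangent_sup[OF z] by blast

lemma tangent_subspace:
  assumes z: "z \<in> M \<inter> U" shows "subspace (tangent_space M z)"
  unfolding tangent_eq[OF z]
  by (rule linear_subspace_image[OF linear_frechet_derivative[OF d\<psi>[OF \<phi>V]] L]) (use z in auto)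

end

lemma submanifold_chart:
  assumes "submanifold M" "p \<in> M"
  shows "\<exists>U V \<phi> \<psi> L. chart M U V \<phi> \<psi> L \<and> p \<in> U"
  using assms(1)[unfolded submanifold_def, rule_format, OF assms(2)]
  unfolding chart_def by (elim exE conjE) (intro exI conjI; assumption)

lemma tangent_space_subspace:
  assumes "submanifold M" "z \<in> M" shows "subspace (tangent_space M z)"
proof -
  obtain U V \<phi> \<psi> L where c: "chart M U V \<phi> \<psi> L" "z \<in> U" using submanifold_chart[OF assms] by (elim exE conjE)
  show ?thesis by (rule chart.tangent_subspace[OF c(1) IntI[OF assms(2) c(2)]])
qed

lemma bl_bound:
  fixes T :: "'a::euclidean_space \<Rightarrow> 'b::real_normed_vector"
  assumes "bounded_linear T"
  shows "norm (T u) \<le> (\<Sum>i\<in>Basis. norm (T i)) * norm u"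
proof -
  have "norm (T u) \<le> onorm T * norm u" by (rule onorm[OF assms])
  also have "\<dots> \<le> (\<Sum>i\<in>Basis. norm (T i)) * norm u"
    by (rule mult_right_mono[OF onorm_componentwise[OF assms] norm_ge_zero])
  finally show ?thesis .
qed

lemma fd_bl: "f differentiable (at x) \<Longrightarrow> bounded_linear (frechet_derivative f (at x))"
  using frechet_derivative_works has_derivative_bounded_linear by blast

context chart begin

lemma ev_MU: "x \<in> U \<Longrightarrow> eventually (\<lambda>z. z \<in> M \<inter> U) (at x within M)"
  unfolding eventually_at_topological using oU by blast

lemma A_cont:
  assumes x: "x \<in> U"
  shows "((\<lambda>z. frechet_derivative \<psi> (at (\<phi> z)) u) \<longlongrightarrow> frechet_derivative \<psi> (at (\<phi> x)) u) (at x within M)"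
proof -
  have c1: "continuous_on V (\<lambda>q. frechet_derivative \<psi> (at q) u)" by (rule smooth_on_deriv_cont[OF s\<psi>])
  have c2: "continuous_on U \<phi>" by (rule smooth_on_cont[OF s\<phi>])
  have "continuous_on U (\<lambda>z. frechet_derivative \<psi> (at (\<phi> z)) u)"
    by (rule continuous_on_compose2[OF c1 c2]) (use im in blast)
  hence "isCont (\<lambda>z. frechet_derivative \<psi> (at (\<phi> z)) u) x"
    using continuous_on_eq_continuous_at[OF oU] x by blast
  hence "((\<lambda>z. frechet_derivative \<psi> (at (\<phi> z)) u) \<longlongrightarrow> frechet_derivative \<psi> (at (\<phi> x)) u) (at x)"
    by (simp add: isCont_def)
  thus ?thesis by (rule tendsto_within_subset) simp
qed

lemma D_cont:
  assumes x: "x \<in> U"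
  shows "((\<lambda>z. frechet_derivative \<phi> (at z) u) \<longlongrightarrow> frechet_derivative \<phi> (at x) u) (at x within M)"
proof -
  have "continuous_on U (\<lambda>z. frechet_derivative \<phi> (at z) u)" by (rule smooth_on_deriv_cont[OF s\<phi>])
  hence "isCont (\<lambda>z. frechet_derivative \<phi> (at z) u) x"
    using continuous_on_eq_continuous_at[OF oU] x by blast
  hence "((\<lambda>z. frechet_derivative \<phi> (at z) u) \<longlongrightarrow> frechet_derivative \<phi> (at x) u) (at x)"
    by (simp add: isCont_def)
  thus ?thesis by (rule tendsto_within_subset) simp
qed

lemma proj_cont:
  assumes x: "x \<in> M \<inter> U"
  shows "((\<lambda>z. closest_point (tangent_space M z) b) \<longlongrightarrow> closest_point (tangent_space M x) b) (at x within M)"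
proof -
  define F where "F = at x within M"
  define P where "P z = closest_point (tangent_space M z)" for z
  define A where "A z = frechet_derivative \<psi> (at (\<phi> z))" for z
  define D where "D z = frechet_derivative \<phi> (at z)" for z
  have xU: "x \<in> U" using x by blast
  have ev: "eventually (\<lambda>z. z \<in> M \<inter> U) F" unfolding F_def by (rule ev_MU[OF xU])
  have TS: "subspace (tangent_space M z)" if "z \<in> M \<inter> U" for z by (rule tangent_subspace[OF that])
  have Teq: "tangent_space M z = A z ` L" if "z \<in> M \<inter> U" for z unfolding A_def by (rule tangent_eq[OF that])
  have Abl: "bounded_linear (A z)" if "z \<in> U" for z
    unfolding A_def by (rule fd_bl[OF d\<psi>[OF \<phi>V[OF that]]])
  have Dbl: "bounded_linear (D z)" if "z \<in> U" for z
    unfolding D_def by (rule fd_bl[OF d\<phi>[OF that]])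
  have Ac: "((\<lambda>z. A z u) \<longlongrightarrow> A x u) F" for u unfolding A_def F_def by (rule A_cont[OF xU])
  have Dc: "((\<lambda>z. D z u) \<longlongrightarrow> D x u) F" for u unfolding D_def F_def by (rule D_cont[OF xU])
  have PxT: "P x b \<in> tangent_space M x" unfolding P_def by (rule cp_in[OF TS[OF x]])
  then obtain w where w: "w \<in> L" and Aw: "P x b = A x w" using Teq[OF x] by blast
  define d where "d = norm (b - P x b)"
  define E where "E z = (\<Sum>i\<in>Basis. norm (A z i - A x i))" for z
  define K where "K z = (\<Sum>i\<in>Basis. norm (D z i))" for z
  define wz where "wz z = D z (P z b)" for z
  define t where "t z = A x (wz z)" for z
  define r where "r z = norm (b - A z w) + E z * (K z * norm b)" for z
  have E0: "E z \<ge> 0" for z unfolding E_def by (intro sum_nonneg) simp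
  have K0: "K z \<ge> 0" for z unfolding K_def by (intro sum_nonneg) simp
  have Et: "(E \<longlongrightarrow> 0) F"
  proof -
    have "((\<lambda>z. \<Sum>i\<in>Basis. norm (A z i - A x i)) \<longlongrightarrow> (\<Sum>i\<in>Basis. norm (A x i - A x i))) F"
      by (intro tendsto_sum tendsto_norm tendsto_diff Ac tendsto_const)
    thus ?thesis unfolding E_def by simp
  qed
  have Kt: "(K \<longlongrightarrow> K x) F" unfolding K_def by (intro tendsto_sum tendsto_norm Dc)
  have rt: "(r \<longlongrightarrow> d) F"
  proof -
    have "(r \<longlongrightarrow> norm (b - A x w) + 0 * (K x * norm b)) F"
      unfolding r_def by (intro tendsto_add tendsto_norm tendsto_diff tendsto_const Ac tendsto_mult Et Kt)
    thus ?thesis unfolding d_def Aw by simp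
  qed
  have key: "norm (P x b - t z) ^ 2 \<le> (r z) ^ 2 - d ^ 2 \<and> norm (P z b - P x b) \<le> norm (P x b - t z) + E z * (K z * norm b)"
    if z: "z \<in> M \<inter> U" for z
  proof -
    have zU: "z \<in> U" using z by blast
    have PzT: "P z b \<in> tangent_space M z" unfolding P_def by (rule cp_in[OF TS[OF z]])
    then obtain w' where w': "w' \<in> L" and Aw': "P z b = A z w'" using Teq[OF z] by blast
    have wzeq: "wz z = w'" unfolding wz_def Aw' A_def D_def by (rule dphi_dpsi[OF zU])
    have tT: "t z \<in> tangent_space M x" unfolding t_def wzeq A_def by (rule tangent_sup[OF x w'])
    have AzwT: "A z w \<in> tangent_space M z" unfolding A_def by (rule tangent_sup[OF z w])
    have b1: "norm (b - P z b) \<le> norm (b - A z w)"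
      using closest_point_le[OF closed_subspace[OF TS[OF z]] AzwT, of b] unfolding P_def by (simp add: dist_norm)
    have "norm (P z b) \<le> norm b" unfolding P_def by (rule cp_norm[OF TS[OF z]])
    hence b2: "norm (wz z) \<le> K z * norm b" unfolding wz_def K_def
      using bl_bound[OF Dbl[OF zU], of "P z b"] K0[of z] unfolding K_def
      by (meson mult_left_mono order_trans)
    have bld: "bounded_linear (\<lambda>u. A z u - A x u)" by (intro bounded_linear_sub Abl zU xU)
    have "P z b - t z = A z (wz z) - A x (wz z)" unfolding t_def wzeq Aw' by simp
    hence "norm (P z b - t z) \<le> E z * norm (wz z)" using bl_bound[OF bld, of "wz z"] unfolding E_def by simp
    also have "\<dots> \<le> E z * (K z * norm b)" by (rule mult_left_mono[OF b2 E0])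
    finally have b3: "norm (P z b - t z) \<le> E z * (K z * norm b)" .
    have "norm (b - t z) = norm ((b - P z b) + (P z b - t z))" by simp
    also have "\<dots> \<le> norm (b - P z b) + norm (P z b - t z)" by (rule norm_triangle_ineq)
    also have "\<dots> \<le> r z" unfolding r_def using b1 b3 by linarith
    finally have b4: "norm (b - t z) \<le> r z" .
    have "P x b - t z \<in> tangent_space M x" by (rule subspace_diff[OF TS[OF x] PxT tT])
    hence orth: "(b - P x b) \<bullet> (P x b - t z) = 0" unfolding P_def by (rule cp_orth[OF TS[OF x]])
    have "(norm (b - t z))\<^sup>2 = (norm ((b - P x b) + (P x b - t z)))\<^sup>2" by simp
    also have "\<dots> = d\<^sup>2 + (norm (P x b - t z))\<^sup>2"
      unfolding d_def using norm_add_Pythagorean[of "b - P x b" "P x b - t z"] orth by (simp add: orthogonal_def)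
    finally have "(norm (P x b - t z))\<^sup>2 = (norm (b - t z))\<^sup>2 - d\<^sup>2" by simp
    also have "\<dots> \<le> (r z)\<^sup>2 - d\<^sup>2" using b4 by (simp add: power_mono)
    finally have k1: "(norm (P x b - t z))\<^sup>2 \<le> (r z)\<^sup>2 - d\<^sup>2" .
    have "norm (P z b - P x b) = norm ((P z b - t z) - (P x b - t z))" by simp
    also have "\<dots> \<le> norm (P z b - t z) + norm (P x b - t z)" by (rule norm_triangle_ineq4)
    finally have "norm (P z b - P x b) \<le> norm (P x b - t z) + E z * (K z * norm b)" using b3 by linarith
    thus ?thesis using k1 by blast
  qed
  have sq: "((\<lambda>z. (norm (P x b - t z))\<^sup>2) \<longlongrightarrow> 0) F"
  proof (rule tendsto_sandwich[of "\<lambda>z. 0" _ F "\<lambda>z. (r z)\<^sup>2 - d\<^sup>2"])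
    show "eventually (\<lambda>z. 0 \<le> (norm (P x b - t z))\<^sup>2) F" by simp
    show "eventually (\<lambda>z. (norm (P x b - t z))\<^sup>2 \<le> (r z)\<^sup>2 - d\<^sup>2) F"
      using ev by (rule eventually_mono) (use key in blast)
    show "((\<lambda>z. 0) \<longlongrightarrow> 0) F" by simp
    have "((\<lambda>z. (r z)\<^sup>2 - d\<^sup>2) \<longlongrightarrow> d\<^sup>2 - d\<^sup>2) F" by (intro tendsto_diff tendsto_power rt tendsto_const)
    thus "((\<lambda>z. (r z)\<^sup>2 - d\<^sup>2) \<longlongrightarrow> 0) F" by simp
  qed
  have nt: "((\<lambda>z. norm (P x b - t z)) \<longlongrightarrow> 0) F"
  proof -
    have "((\<lambda>z. sqrt ((norm (P x b - t z))\<^sup>2)) \<longlongrightarrow> sqrt 0) F" by (rule tendsto_real_sqrt[OF sq])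
    thus ?thesis by simp
  qed
  have "((\<lambda>z. norm (P x b - t z) + E z * (K z * norm b)) \<longlongrightarrow> 0 + 0 * (K x * norm b)) F"
    by (intro tendsto_add nt tendsto_mult Et Kt tendsto_const)
  hence g0: "((\<lambda>z. norm (P x b - t z) + E z * (K z * norm b)) \<longlongrightarrow> 0) F" by simp
  have "((\<lambda>z. P z b - P x b) \<longlongrightarrow> 0) F"
    by (rule Lim_null_comparison[OF _ g0]) (use ev in \<open>rule eventually_mono\<close>, use key in blast)
  hence "((\<lambda>z. P z b) \<longlongrightarrow> P x b) F" by (simp add: LIM_zero_iff)
  thus ?thesis unfolding P_def F_def .
qed

end

lemma grad_ineq:
  fixes T :: "'a::euclidean_space set"
  assumes T: "subspace T" and J: "bounded_linear J" and JT: "\<And>v. J v \<in> T"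
    and c: "c = onorm (\<lambda>v. closest_point T v - J v)" and c1: "c < 1"
    and H: "\<And>v. H \<bullet> v = J v \<bullet> g"
  shows "norm (closest_point T g) \<le> 1 / (1 - c) * norm H"
proof -
  define p where "p = closest_point T g"
  have pT: "p \<in> T" unfolding p_def by (rule cp_in[OF T])
  have Lbl: "bounded_linear (\<lambda>v. closest_point T v - J v)"
    by (intro bounded_linear_sub cp_bounded_linear[OF T] J)
  have cpp: "closest_point T p = p" by (rule cp_id[OF T pT])
  have qT: "p - J p \<in> T" by (rule subspace_diff[OF T pT JT])
  have o1: "(g - p) \<bullet> p = 0" unfolding p_def by (rule cp_orth[OF T cp_in[OF T]])
  have o2: "(g - p) \<bullet> (p - J p) = 0" unfolding p_def by (rule cp_orth[OF T qT[unfolded p_def]])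
  have "p \<bullet> p = p \<bullet> g" using o1 by (simp add: inner_diff_left inner_diff_right inner_commute)
  also have "\<dots> = (p - J p) \<bullet> g + J p \<bullet> g" by (simp add: inner_diff_left)
  also have "(p - J p) \<bullet> g = (p - J p) \<bullet> p"
    using o2 by (simp add: inner_diff_left inner_diff_right inner_commute)
  also have "J p \<bullet> g = H \<bullet> p" using H by simp
  finally have eq: "p \<bullet> p = (p - J p) \<bullet> p + H \<bullet> p" .
  have "(p - J p) \<bullet> p \<le> norm (p - J p) * norm p" by (rule Cauchy_Schwarz_ineq2[THEN order_trans[OF abs_ge_self]])
  also have "norm (p - J p) \<le> c * norm p"
    using onorm[OF Lbl, of p] unfolding c cpp by simp
  hence "norm (p - J p) * norm p \<le> c * norm p * norm p" by (rule mult_right_mono) simp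
  finally have i1: "(p - J p) \<bullet> p \<le> c * norm p * norm p" .
  have i2: "H \<bullet> p \<le> norm H * norm p" by (rule Cauchy_Schwarz_ineq2[THEN order_trans[OF abs_ge_self]])
  have "norm p * norm p \<le> c * norm p * norm p + norm H * norm p"
    using eq i1 i2 by (simp add: dot_square_norm power2_eq_square)
  hence "(1 - c) * norm p * norm p \<le> norm H * norm p" by (simp add: algebra_simps)
  hence le: "(1 - c) * norm p \<le> norm H"
  proof (cases "norm p = 0")
    case True thus ?thesis by simp
  next
    case False
    hence "norm p > 0" by simp
    thus ?thesis using \<open>(1 - c) * norm p * norm p \<le> norm H * norm p\<close>
      by (meson mult_le_cancel_right_pos)
  qed
  have "norm p \<le> norm H / (1 - c)" using le c1 by (simp add: field_simps)
  thus ?thesis unfolding p_def by simp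
qed

lemma egrad_works:
  fixes f :: "'a::euclidean_space \<Rightarrow> real"
  assumes "f differentiable (at z)"
  shows "GDERIV f z :> egrad f z"
proof -
  define D where "D = frechet_derivative f (at z)"
  have fd: "(f has_derivative D) (at z)" unfolding D_def using frechet_derivative_works assms by blast
  have lD: "linear D" unfolding D_def by (rule linear_frechet_derivative[OF assms])
  define g where "g = (\<Sum>i\<in>Basis. D i *\<^sub>R i)"
  have "D h = h \<bullet> g" for h
  proof -
    have "D h = D (\<Sum>i\<in>Basis. (h \<bullet> i) *\<^sub>R i)" by (simp add: euclidean_representation)
    also have "\<dots> = (\<Sum>i\<in>Basis. (h \<bullet> i) * D i)" by (simp add: linear_sum[OF lD] linear_scale[OF lD])
    also have "\<dots> = h \<bullet> g" unfolding g_def by (simp add: inner_sum_right mult.commute)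
    finally show ?thesis .
  qed
  hence "D = (\<lambda>h. h \<bullet> g)" by blast
  hence "GDERIV f z :> g" using fd by (simp add: gderiv_def)
  thus ?thesis unfolding egrad_def by (rule someI)
qed

lemma curve_tangent:
  fixes G :: "'b::euclidean_space \<Rightarrow> 'a::euclidean_space"
  assumes G: "smooth_on W G" and p: "p \<in> W"
    and inM: "\<And>t. p + t *\<^sub>R u \<in> W \<Longrightarrow> G (p + t *\<^sub>R u) \<in> M"
  shows "frechet_derivative G (at p) u \<in> tangent_space M (G p)"
proof -
  have oW: "open W" using G unfolding smooth_on_def by (rule conjunct1)
  obtain r where r: "r > 0" "ball p r \<subseteq> W" using oW p openE by blast
  define e where "e = r / (norm u + 1)"
  have "norm u + 1 > 0" using norm_ge_zero[of u] by linarith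
  hence e: "e > 0" using r unfolding e_def by simp
  have sub: "p + t *\<^sub>R u \<in> W" if t: "t \<in> {-e<..<e}" for t
  proof -
    have "norm (t *\<^sub>R u) = \<bar>t\<bar> * norm u" by simp
    also have "\<dots> \<le> e * norm u" using t by (intro mult_right_mono) auto
    also have "\<dots> < r" using r unfolding e_def by (simp add: field_simps add_pos_nonneg)
    finally have "dist (p + t *\<^sub>R u) p < r" by (simp add: dist_norm)
    thus ?thesis using r by (auto simp: dist_commute)
  qed
  define c where "c = (\<lambda>t. G (p + t *\<^sub>R u))"
  have sc: "smooth_on {-e<..<e} c" unfolding c_def
    by (rule smooth_on_affine[OF G open_greaterThanLessThan sub])
  have c0: "c 0 = G p" by (simp add: c_def)
  have cM: "c t \<in> M" if t: "t \<in> {-e<..<e}" for t unfolding c_def by (rule inM[OF sub[OF t]])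
  have dG: "G differentiable (at p)" by (rule smooth_on_differentiable[OF G p])
  have l: "((\<lambda>t. p + t *\<^sub>R u) has_derivative (\<lambda>s. s *\<^sub>R u)) (at 0)"
    by (auto intro!: derivative_eq_intros)
  have g': "(G has_derivative frechet_derivative G (at (p + 0 *\<^sub>R u))) (at (p + 0 *\<^sub>R u))"
    using frechet_derivative_works[THEN iffD1, OF dG] by simp
  have lin: "linear (frechet_derivative G (at p))" by (rule linear_frechet_derivative[OF dG])
  have "(c has_derivative (\<lambda>s. frechet_derivative G (at p) (s *\<^sub>R u))) (at 0)"
    using diff_chain_at[OF l g'] by (simp add: o_def c_def)
  hence "(c has_vector_derivative frechet_derivative G (at p) u) (at 0)"
    unfolding has_vector_derivative_def using linear_scale[OF lin] by simp
  thus ?thesis unfolding tangent_space_def using e sc c0 cM by blast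
qed

theorem proposition2p7:
  fixes f :: "'a::euclidean_space \<Rightarrow> real" and M :: "'a set" and Retr :: "'a \<Rightarrow> 'a \<Rightarrow> 'a"
  assumes "smooth_on UNIV f" and "submanifold M" and "retraction M Retr"
  shows "\<forall>x\<in>M. \<exists>\<delta>>0. \<forall>\<xi>\<in>tangent_space M x. norm \<xi> < \<delta> \<longrightarrow>
           (let y = Retr x \<xi>;
                J = frechet_derivative (retr_ext M Retr x) (at \<xi>);
                c = onorm (\<lambda>v. tproj M y v - J v)
            in c < 1 \<and>
               norm (rgrad M f y) \<le> (1 / (1 - c)) * norm (egrad (\<lambda>z. f (retr_ext M Retr x z)) \<xi>))"
proof (intro ballI)
  fix x assume xM: "x \<in> M"
  have R1: "smooth_map_on (tangent_bundle M) (\<lambda>(x, v). Retr x v)"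
    and R2: "\<forall>x\<in>M. \<forall>v\<in>tangent_space M x. Retr x v \<in> M"
    and R3: "\<forall>x\<in>M. Retr x 0 = x"
    using assms(3) unfolding retraction_def by blast+
  define TX where "TX = tangent_space M x"
  have TXs: "subspace TX" unfolding TX_def by (rule tangent_space_subspace[OF assms(2) xM])
  define Px where "Px = closest_point TX"
  have Pxbl: "bounded_linear Px" unfolding Px_def by (rule cp_bounded_linear[OF TXs])
  have Px_id: "Px v = v" if "v \<in> TX" for v unfolding Px_def by (rule cp_id[OF TXs that])
  have PxT: "Px v \<in> TX" for v unfolding Px_def by (rule cp_in[OF TXs])
  have Px0: "Px 0 = 0" by (rule Px_id[OF subspace_0[OF TXs]])
  have RM: "Retr x v \<in> M" if "v \<in> TX" for v using R2 xM that unfolding TX_def by blast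
  have Rx0: "Retr x 0 = x" using R3 xM by blast
  have "(x, 0) \<in> tangent_bundle M" unfolding tangent_bundle_def using xM subspace_0[OF TXs] TX_def by simp
  then obtain W G where oW: "open W" and xW: "(x, 0) \<in> W" and sG: "smooth_on W G"
    and GR: "\<forall>q\<in>W \<inter> tangent_bundle M. G q = (\<lambda>(x, v). Retr x v) q"
    using R1 unfolding smooth_map_on_def by blast
  have GR': "G (x, v) = Retr x v" if "v \<in> TX" "(x, v) \<in> W" for v
    using GR that xM unfolding tangent_bundle_def TX_def by auto
  have cPair: "continuous (at z) (\<lambda>z. (x, Px z))" for z
    by (intro continuous_intros linear_continuous_at[OF Pxbl])
  define N where "N = (\<lambda>z. (x, Px z)) -` W"
  have oN: "open N" unfolding N_def by (rule continuous_open_vimage[OF oW cPair])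
  have N0: "0 \<in> N" unfolding N_def using xW Px0 by simp
  have NW: "(x, Px z) \<in> W" if "z \<in> N" for z using that unfolding N_def by simp
  have ext_eq: "retr_ext M Retr x z = G (x, Px z)" if "z \<in> N" for z
    unfolding retr_ext_def tproj_def TX_def[symmetric] Px_def[symmetric]
    by (rule GR'[OF PxT NW[OF that], symmetric])
  define J' where "J' z v = frechet_derivative G (at (x, Px z)) (0, Px v)" for z v
  have Phid: "((\<lambda>z. G (x, Px z)) has_derivative J' z) (at z)" if z: "z \<in> N" for z
  proof -
    have i: "((\<lambda>z. (x, Px z)) has_derivative (\<lambda>v. (0, Px v))) (at z)"
      by (intro has_derivative_Pair has_derivative_const bounded_linear.has_derivative[OF Pxbl] has_derivative_ident)
    have "G differentiable (at (x, Px z))" by (rule smooth_on_differentiable[OF sG NW[OF z]])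
    hence g: "(G has_derivative frechet_derivative G (at (x, Px z))) (at (x, Px z))"
      using frechet_derivative_works by blast
    show ?thesis using diff_chain_at[OF i g] unfolding J'_def by (simp add: o_def)
  qed
  have extd: "(retr_ext M Retr x has_derivative J' z) (at z)" if z: "z \<in> N" for z
    by (rule has_derivative_transform_within_open[OF Phid[OF z] oN z]) (simp add: ext_eq)
  have Jeq: "frechet_derivative (retr_ext M Retr x) (at z) = J' z" if z: "z \<in> N" for z
    using frechet_derivative_at[OF extd[OF z]] by simp
  have DG0: "frechet_derivative G (at (x, 0)) (0, u) = u" if u: "u \<in> TX" for u
  proof -
    define X where "X = (\<lambda>t::real. (x, t *\<^sub>R u)) -` W"
    have "continuous (at t) (\<lambda>t::real. (x, t *\<^sub>R u))" for t by (intro continuous_intros)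
    hence oX: "open X" unfolding X_def by (rule continuous_open_vimage[OF oW])
    have X0: "0 \<in> X" unfolding X_def using xW by simp
    have tu: "t *\<^sub>R u \<in> TX" for t by (rule subspace_scale[OF TXs u])
    have "((\<lambda>t. Retr x (t *\<^sub>R u)) has_vector_derivative u) (at 0)"
      using assms(3) xM u unfolding retraction_def TX_def by blast
    hence d1: "((\<lambda>t. Retr x (t *\<^sub>R u)) has_derivative (\<lambda>s. s *\<^sub>R u)) (at 0)"
      by (simp add: has_vector_derivative_def)
    have d2: "((\<lambda>t. G (x, t *\<^sub>R u)) has_derivative (\<lambda>s. s *\<^sub>R u)) (at 0)"
      by (rule has_derivative_transform_within_open[OF d1 oX X0])
         (simp add: X_def GR'[OF tu])
    have i: "((\<lambda>t::real. (x, t *\<^sub>R u)) has_derivative (\<lambda>s. (0, s *\<^sub>R u))) (at 0)"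
      by (auto intro!: derivative_eq_intros)
    have "G differentiable (at (x, 0))" by (rule smooth_on_differentiable[OF sG xW])
    hence g: "(G has_derivative frechet_derivative G (at (x, 0 *\<^sub>R u))) (at (x, 0 *\<^sub>R u))"
      using frechet_derivative_works[THEN iffD1] by simp
    have lin: "linear (frechet_derivative G (at (x, 0)))"
      by (rule linear_frechet_derivative[OF \<open>G differentiable (at (x, 0))\<close>])
    have d3: "((\<lambda>t. G (x, t *\<^sub>R u)) has_derivative (\<lambda>s. frechet_derivative G (at (x, 0)) (0, s *\<^sub>R u))) (at 0)"
      using diff_chain_at[OF i g] by (simp add: o_def)
    have "(\<lambda>s. frechet_derivative G (at (x, 0)) (0, s *\<^sub>R u)) = (\<lambda>s. s *\<^sub>R u)"
      by (rule has_derivative_unique[OF d3 d2])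
    from fun_cong[OF this, of 1] show ?thesis by simp
  qed
  have JT: "J' \<xi> v \<in> tangent_space M (Retr x \<xi>)" if \<xi>: "\<xi> \<in> N" "\<xi> \<in> TX" for \<xi> v
  proof -
    have pW: "(x, \<xi>) \<in> W" using NW[OF \<xi>(1)] Px_id[OF \<xi>(2)] by simp
    have "frechet_derivative G (at (x, \<xi>)) (0, Px v) \<in> tangent_space M (G (x, \<xi>))"
    proof (rule curve_tangent[OF sG pW])
      fix t assume "(x, \<xi>) + t *\<^sub>R (0, Px v) \<in> W"
      hence w: "(x, \<xi> + t *\<^sub>R Px v) \<in> W" by simp
      have T: "\<xi> + t *\<^sub>R Px v \<in> TX" by (rule subspace_add[OF TXs \<xi>(2) subspace_scale[OF TXs PxT]])
      show "G ((x, \<xi>) + t *\<^sub>R (0, Px v)) \<in> M" using GR'[OF T w] RM[OF T] by simp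
    qed
    thus ?thesis unfolding J'_def using Px_id[OF \<xi>(2)] GR'[OF \<xi>(2) pW] by simp
  qed
  define F where "F = inf (nhds (0::'a)) (principal TX)"
  have evN: "eventually (\<lambda>\<xi>. \<xi> \<in> N) F"
    unfolding F_def eventually_inf_principal by (rule eventually_mono[OF eventually_nhds_in_open[OF oN N0]]) simp
  have evT: "eventually (\<lambda>\<xi>. \<xi> \<in> TX) F"
    unfolding F_def eventually_inf_principal by simp
  have contF: "(h \<longlongrightarrow> h 0) F" if "continuous_on N h" for h :: "'a \<Rightarrow> 'c::topological_space"
  proof -
    have "isCont h 0" using that continuous_on_eq_continuous_at[OF oN] N0 by blast
    hence "(h \<longlongrightarrow> h 0) (nhds 0)" by (simp add: isCont_def tendsto_at_iff_tendsto_nhds)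
    thus ?thesis unfolding F_def by (rule tendsto_mono[rotated]) simp
  qed
  have cPairN: "continuous_on N (\<lambda>z. (x, Px z))" by (intro continuous_at_imp_continuous_on ballI cPair)
  have img: "(\<lambda>z. (x, Px z)) ` N \<subseteq> W" using NW by blast
  have ycont: "((\<lambda>\<xi>. Retr x \<xi>) \<longlongrightarrow> x) F"
  proof -
    have "continuous_on N (\<lambda>\<xi>. G (x, Px \<xi>))"
      by (rule continuous_on_compose2[OF smooth_on_cont[OF sG] cPairN img])
    from contF[OF this] have "((\<lambda>\<xi>. G (x, Px \<xi>)) \<longlongrightarrow> x) F"
      using GR'[OF subspace_0[OF TXs] xW] Px0 Rx0 by simp
    moreover have "eventually (\<lambda>\<xi>. G (x, Px \<xi>) = Retr x \<xi>) F"
      using eventually_conj[OF evN evT] by (rule eventually_mono) (metis GR' Px_id NW)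
    ultimately show ?thesis using Lim_transform_eventually by fastforce
  qed
  have yM: "eventually (\<lambda>\<xi>. Retr x \<xi> \<in> M) F" using evT by (rule eventually_mono) (rule RM)
  have PC: "((\<lambda>\<xi>. closest_point (tangent_space M (Retr x \<xi>)) i) \<longlongrightarrow> Px i) F" for i
  proof -
    obtain U V \<phi> \<psi> L where ch: "chart M U V \<phi> \<psi> L" "x \<in> U"
      using submanifold_chart[OF assms(2) xM] by (elim exE conjE)
    have "((\<lambda>z. closest_point (tangent_space M z) i) \<longlongrightarrow> closest_point (tangent_space M x) i) (at x within M)"
      by (rule chart.proj_cont[OF ch(1) IntI[OF xM ch(2)]])
    hence "continuous (at x within M) (\<lambda>z. closest_point (tangent_space M z) i)"
      by (simp add: continuous_within)
    from continuous_within_tendsto_compose[OF this yM ycont] show ?thesis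
      unfolding Px_def TX_def by simp
  qed
  have JC: "((\<lambda>\<xi>. J' \<xi> i) \<longlongrightarrow> Px i) F" for i
  proof -
    have "continuous_on N (\<lambda>\<xi>. frechet_derivative G (at (x, Px \<xi>)) (0, Px i))"
      by (rule continuous_on_compose2[OF smooth_on_deriv_cont[OF sG] cPairN img])
    from contF[OF this] show ?thesis unfolding J'_def using Px0 DG0[OF PxT] by simp
  qed
  have "((\<lambda>\<xi>. \<Sum>i\<in>Basis. norm (closest_point (tangent_space M (Retr x \<xi>)) i - J' \<xi> i)) \<longlongrightarrow>
      (\<Sum>i\<in>Basis. norm (Px i - Px i))) F"
    by (intro tendsto_sum tendsto_norm tendsto_diff PC JC)
  hence "((\<lambda>\<xi>. \<Sum>i\<in>Basis. norm (closest_point (tangent_space M (Retr x \<xi>)) i - J' \<xi> i)) \<longlongrightarrow> 0) F"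
    by simp
  from order_tendstoD(2)[OF this zero_less_one]
  have "eventually (\<lambda>\<xi>. \<xi> \<in> N \<and> (\<Sum>i\<in>Basis. norm (closest_point (tangent_space M (Retr x \<xi>)) i - J' \<xi> i)) < 1) F"
    using evN by (simp add: eventually_conj_iff)
  then obtain \<delta> where \<delta>: "\<delta> > 0" and H\<delta>: "\<And>\<xi>. dist \<xi> 0 < \<delta> \<Longrightarrow> \<xi> \<in> TX \<Longrightarrow>
      \<xi> \<in> N \<and> (\<Sum>i\<in>Basis. norm (closest_point (tangent_space M (Retr x \<xi>)) i - J' \<xi> i)) < 1"
    unfolding F_def eventually_inf_principal eventually_nhds_metric by blast
  show "\<exists>\<delta>>0. \<forall>\<xi>\<in>tangent_space M x. norm \<xi> < \<delta> \<longrightarrow>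
           (let y = Retr x \<xi>;
                J = frechet_derivative (retr_ext M Retr x) (at \<xi>);
                c = onorm (\<lambda>v. tproj M y v - J v)
            in c < 1 \<and>
               norm (rgrad M f y) \<le> (1 / (1 - c)) * norm (egrad (\<lambda>z. f (retr_ext M Retr x z)) \<xi>))"
  proof (intro exI[of _ \<delta>] conjI \<delta> ballI impI)
    fix \<xi> assume \<xi>T': "\<xi> \<in> tangent_space M x" and n\<xi>: "norm \<xi> < \<delta>"
    have \<xi>T: "\<xi> \<in> TX" using \<xi>T' unfolding TX_def .
    have \<xi>N: "\<xi> \<in> N" and sm: "(\<Sum>i\<in>Basis. norm (closest_point (tangent_space M (Retr x \<xi>)) i - J' \<xi> i)) < 1"
      using H\<delta>[OF _ \<xi>T] n\<xi> by simp_all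
    define y where "y = Retr x \<xi>"
    define TY where "TY = tangent_space M y"
    have yM': "y \<in> M" unfolding y_def by (rule RM[OF \<xi>T])
    have TYs: "subspace TY" unfolding TY_def by (rule tangent_space_subspace[OF assms(2) yM'])
    have Jbl: "bounded_linear (J' \<xi>)" by (rule has_derivative_bounded_linear[OF extd[OF \<xi>N]])
    have JTY: "J' \<xi> v \<in> TY" for v unfolding TY_def y_def by (rule JT[OF \<xi>N \<xi>T])
    define c where "c = onorm (\<lambda>v. closest_point TY v - J' \<xi> v)"
    have Lbl: "bounded_linear (\<lambda>v. closest_point TY v - J' \<xi> v)"
      by (intro bounded_linear_sub cp_bounded_linear[OF TYs] Jbl)
    have "c \<le> (\<Sum>i\<in>Basis. norm (closest_point TY i - J' \<xi> i))"
      unfolding c_def by (rule onorm_componentwise[OF Lbl])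
    hence c1: "c < 1" using sm unfolding TY_def y_def by simp
    have yext: "retr_ext M Retr x \<xi> = y"
      unfolding y_def ext_eq[OF \<xi>N] using GR'[OF \<xi>T] NW[OF \<xi>N] Px_id[OF \<xi>T] by simp
    define g where "g = egrad f y"
    have fdy: "f differentiable (at y)" by (rule smooth_on_differentiable[OF assms(1)]) simp
    have gd: "(f has_derivative (\<lambda>h. h \<bullet> g)) (at (retr_ext M Retr x \<xi>))"
      using egrad_works[OF fdy] unfolding g_def yext by (simp add: gderiv_def)
    have comp: "((\<lambda>z. f (retr_ext M Retr x z)) has_derivative (\<lambda>h. J' \<xi> h \<bullet> g)) (at \<xi>)"
      using diff_chain_at[OF extd[OF \<xi>N] gd] by (simp add: o_def)
    define H where "H = egrad (\<lambda>z. f (retr_ext M Retr x z)) \<xi>"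
    have "(\<lambda>z. f (retr_ext M Retr x z)) differentiable (at \<xi>)" using comp by (rule differentiableI)
    from egrad_works[OF this] have Hd: "((\<lambda>z. f (retr_ext M Retr x z)) has_derivative (\<lambda>h. h \<bullet> H)) (at \<xi>)"
      unfolding H_def by (simp add: gderiv_def)
    have "(\<lambda>h. h \<bullet> H) = (\<lambda>h. J' \<xi> h \<bullet> g)" by (rule has_derivative_unique[OF Hd comp])
    hence HJ: "H \<bullet> v = J' \<xi> v \<bullet> g" for v using fun_cong[of "\<lambda>h. h \<bullet> H" _ v] by (simp add: inner_commute)
    have gi: "norm (closest_point TY g) \<le> 1 / (1 - c) * norm H"
      by (rule grad_ineq[OF TYs Jbl JTY c_def c1 HJ])
    have eqs: "rgrad M f y = closest_point TY g" unfolding rgrad_def tproj_def g_def TY_def ..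
    have tp: "tproj M y = closest_point TY" unfolding tproj_def TY_def by (rule ext) simp
    show "let y = Retr x \<xi>;
                J = frechet_derivative (retr_ext M Retr x) (at \<xi>);
                c = onorm (\<lambda>v. tproj M y v - J v)
            in c < 1 \<and>
               norm (rgrad M f y) \<le> (1 / (1 - c)) * norm (egrad (\<lambda>z. f (retr_ext M Retr x z)) \<xi>)"
      unfolding Let_def y_def[symmetric] Jeq[OF \<xi>N] tp c_def[symmetric] H_def[symmetric] eqs
      using c1 gi by blast
  qed
qed

end
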